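(* Let $G,H$ be real Hilbert spaces, $D\subset G$, and $\lambda_F,\lambda_f>0$. Let $F:G\to H$ be $\lambda_F$-UC on $D$ and let $f:H\to\mathbb{R}$ be $\lambda_f$-PL on $F(D)$. Then for all $x\in D$, \[ \tfrac12\|\nabla(f\circ F)(x)\|^2\ge \lambda_F\lambda_f\bigl((f\circ F)(x)-f_*\bigr), \] where $f_*=\inf_{h\in H}f(h)$.
   Context: For $F:G\to H$ between Hilbert spaces, $\partial F(x)\in\mathcal{L}(G,H)$ is the Fréchet derivative at $x$ and $\partial F(x)^*\in\mathcal{L}(H,G)$ its adjoint; for $f:H\to\mathbb{R}$, $\nabla f(x)\in H$ is the gradient. An operator $B\in\mathcal{L}(H,H)$ is $\lambda$-coercive ($\lambda>0$) if $\langle y,By\rangle\ge\lambda\|y\|^2$ for all $y\in H$. $F$ (differentiable on $D$) is $\lambda$-UC (uniformly conditioned) on $D$ if $\partial F(x)\circ\partial F(x)^*$ is $\lambda$-coercive for every $x\in D$. A function $f:H\to\mathbb{R}$ that is bounded below on $H$ and differentiable on a set $E$ is $\lambda$-PL (Polyak–Łojasiewicz) on $E$, $\lambda>0$, if $\tfrac12\|\nabla f(x)\|^2\ge\lambda(f(x)-f_* )$ for all $x\in E$, where $f_*=\inf_{h\in H}f(h)\in\mathbb{R}$. *)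

theory Defs
  imports "HOL-Analysis.Analysis"
begin

definition gradient :: "('a::real_inner \<Rightarrow> real) \<Rightarrow> 'a \<Rightarrow> 'a" where
  "gradient f x = (SOME g. GDERIV f x :> g)"

definition coercive :: "real \<Rightarrow> ('a::real_inner \<Rightarrow> 'a) \<Rightarrow> bool" where
  "coercive lam B \<longleftrightarrow> (\<forall>y. inner y (B y) \<ge> lam * (norm y)\<^sup>2)"

definition UC :: "real \<Rightarrow> ('g::real_inner \<Rightarrow> 'h::real_inner) \<Rightarrow> 'g set \<Rightarrow> bool" where
  "UC lam F D \<longleftrightarrow> (\<forall>x\<in>D. F differentiable (at x) \<and>
      coercive lam (frechet_derivative F (at x) \<circ> adjoint (frechet_derivative F (at x))))"

definition PL :: "real \<Rightarrow> ('h::real_inner \<Rightarrow> real) \<Rightarrow> 'h set \<Rightarrow> bool" where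
  "PL lam f E \<longleftrightarrow> bdd_below (range f) \<and>
     (\<forall>x\<in>E. f differentiable (at x) \<and>
        (1/2) * (norm (gradient f x))\<^sup>2 \<ge> lam * (f x - (INF h. f h)))"

end

theory Submission
  imports Defs
begin

lemma parallelogram_aux:
  fixes a b :: "'a::real_inner"
  shows "(norm (a - b))\<^sup>2 + (norm (a + b))\<^sup>2 = 2 * (norm a)\<^sup>2 + 2 * (norm b)\<^sup>2"
  by (simp add: power2_norm_eq_inner inner_add_left inner_add_right inner_diff_left inner_diff_right inner_commute)

lemma riesz_rep:
  fixes l :: "'a::{real_inner,complete_space} \<Rightarrow> real"
  assumes bl: "bounded_linear l"
  shows "\<exists>w. \<forall>x. l x = inner x w"
proof (cases "\<forall>x. l x = 0")
  case True then show ?thesis by (intro exI[of _ 0]) auto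
next
  case False
  interpret bounded_linear l by fact
  obtain x0 where x0: "l x0 \<noteq> 0" using False by blast
  define A where "A = {x. l x = 1}"
  have eA: "x0 /\<^sub>R l x0 \<in> A" using x0 by (simp add: A_def scale)
  define d where "d = Inf ((\<lambda>x. (norm x)\<^sup>2) ` A)"
  have bdd: "bdd_below ((\<lambda>x. (norm x)\<^sup>2) ` A)"
    by (rule bdd_belowI[of _ 0]) auto
  have low: "d \<le> (norm y)\<^sup>2" if "y \<in> A" for y
    unfolding d_def by (rule cInf_lower[OF imageI[OF that] bdd])
  have ne: "(\<lambda>x. (norm x)\<^sup>2) ` A \<noteq> {}" using eA by blast
  have ex: "\<exists>x. x \<in> A \<and> (norm x)\<^sup>2 < d + 1 / real (Suc n)" for n
  proof -
    have "d < d + 1 / real (Suc n)" by simp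
    then have "Inf ((\<lambda>x. (norm x)\<^sup>2) ` A) < d + 1 / real (Suc n)" by (simp only: d_def)
    from cInf_lessD[OF ne this] show ?thesis by blast
  qed
  obtain s where s0: "\<forall>n. s n \<in> A \<and> (norm (s n))\<^sup>2 < d + 1 / real (Suc n)"
    proof -
    have "\<forall>n. \<exists>x. x \<in> A \<and> (norm x)\<^sup>2 < d + 1 / real (Suc n)" using ex by blast
    from choice[OF this] obtain s' where "\<forall>n. s' n \<in> A \<and> (norm (s' n))\<^sup>2 < d + 1 / real (Suc n)"
      by blast
    then show ?thesis by (rule that)
  qed
  have s: "\<And>n. s n \<in> A" "\<And>n. (norm (s n))\<^sup>2 < d + 1 / real (Suc n)"
    using s0 by auto
  have mid: "(1/2) *\<^sub>R (a + b) \<in> A" if "a \<in> A" "b \<in> A" for a b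
    using that by (simp add: A_def scale add)
  have par: "(norm (s m - s n))\<^sup>2 \<le> 2 / real (Suc m) + 2 / real (Suc n)" for m n
  proof -
    have "d \<le> (norm ((1/2) *\<^sub>R (s m + s n)))\<^sup>2" using low mid s(1) by blast
    also have "\<dots> = (norm (s m + s n))\<^sup>2 / 4" by (simp add: power2_eq_square)
    finally have "4 * d \<le> (norm (s m + s n))\<^sup>2" by simp
    moreover note parallelogram_aux[of "s m" "s n"] s(2)[of m] s(2)[of n]
    ultimately show ?thesis by linarith
  qed
  have "Cauchy s"
  proof (rule metric_CauchyI)
    fix e :: real assume e: "e > 0"
    obtain M :: nat where M: "real M > 4 / e\<^sup>2" using reals_Archimedean2 by blast
    have "4 / real (Suc M) < e\<^sup>2"
    proof -
      have "4 / e\<^sup>2 < real (Suc M)" using M by simp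
      then show ?thesis using e by (simp add: field_simps)
    qed
    show "\<exists>M. \<forall>m\<ge>M. \<forall>n\<ge>M. dist (s m) (s n) < e"
    proof (intro exI allI impI)
      fix m n assume mn: "M \<le> m" "M \<le> n"
      have "2 / real (Suc m) \<le> 2 / real (Suc M)" "2 / real (Suc n) \<le> 2 / real (Suc M)"
        using mn by (auto intro!: divide_left_mono)
      then have "(norm (s m - s n))\<^sup>2 < e\<^sup>2"
        using par[of m n] \<open>4 / real (Suc M) < e\<^sup>2\<close> by linarith
      then have "norm (s m - s n) < e" using e by (simp add: power_less_imp_less_base)
      then show "dist (s m) (s n) < e" by (simp add: dist_norm)
    qed
  qed
  then obtain u where u: "s \<longlonglongrightarrow> u" using Cauchy_convergent_iff convergent_def by blast
  have lim1: "(\<lambda>n. l (s n)) \<longlonglongrightarrow> l u" using tendsto[OF u] .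
  have "(\<lambda>n. l (s n)) = (\<lambda>n. 1)" using s(1) by (auto simp: A_def)
  then have "(\<lambda>n. 1::real) \<longlonglongrightarrow> l u" using lim1 by simp
  then have lu: "l u = 1" by (simp add: LIMSEQ_const_iff)
  have lim2: "(\<lambda>n. (norm (s n))\<^sup>2) \<longlonglongrightarrow> (norm u)\<^sup>2" by (intro tendsto_intros u)
  have lim3: "(\<lambda>n. d + inverse (real (Suc n))) \<longlonglongrightarrow> d + 0"
    by (intro tendsto_intros LIMSEQ_inverse_real_of_nat)
  have "(norm u)\<^sup>2 \<le> d + 0"
  proof (rule LIMSEQ_le[OF lim2 lim3])
    show "\<exists>N. \<forall>n\<ge>N. (norm (s n))\<^sup>2 \<le> d + inverse (real (Suc n))"
      using s(2) by (metis inverse_eq_divide less_imp_le)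
  qed
  then have nu: "(norm u)\<^sup>2 \<le> d" by simp
  have orth: "inner u k = 0" if k: "l k = 0" for k
  proof (rule ccontr)
    assume c0: "inner u k \<noteq> 0"
    define c where "c = inner u k"
    define K where "K = (norm k)\<^sup>2"
    have K0: "K \<ge> 0" by (simp add: K_def)
    define t where "t = - c / (K + 1)"
    have uA: "u + t *\<^sub>R k \<in> A" using lu k by (simp add: A_def add scale)
    have "(norm u)\<^sup>2 \<le> (norm (u + t *\<^sub>R k))\<^sup>2" using nu low[OF uA] by linarith
    also have "\<dots> = (norm u)\<^sup>2 + 2 * t * c + t\<^sup>2 * K"
        unfolding c_def K_def power2_norm_eq_inner
      by (simp add: inner_add_left inner_add_right inner_commute algebra_simps power2_eq_square)
    finally have ineq: "0 \<le> 2 * t * c + t\<^sup>2 * K" by simp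
    have K1: "K + 1 \<noteq> 0" using K0 by linarith
    have c_eq: "c = - t * (K + 1)" using K1 by (simp add: t_def)
    have t0: "t \<noteq> 0" using c0 c_eq c_def by auto
    have "2 * t * c + t\<^sup>2 * K = - (t\<^sup>2 * (K + 2))"
      by (simp add: c_eq power2_eq_square algebra_simps)
    also have "\<dots> < 0" using t0 K0 by (simp add: mult_pos_pos)
    finally show False using ineq by simp
  qed
  have un: "(norm u)\<^sup>2 \<noteq> 0" using lu by auto
  show ?thesis
  proof (intro exI allI)
    fix x
    have "l (x - l x *\<^sub>R u) = 0" using lu by (simp add: diff scale)
    then have "inner u (x - l x *\<^sub>R u) = 0" by (rule orth)
    then have "inner x u = l x * (norm u)\<^sup>2"
      by (simp add: inner_diff_right power2_norm_eq_inner inner_commute)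
    then show "l x = inner x (u /\<^sub>R (norm u)\<^sup>2)" using un by simp
  qed
qed

theorem lemma2:
  fixes F :: "'g::{real_inner,complete_space} \<Rightarrow> 'h::{real_inner,complete_space}"
    and f :: "'h \<Rightarrow> real" and D :: "'g set" and lamF lamf :: real
  assumes "lamF > 0" and "lamf > 0"
    and "UC lamF F D" and "PL lamf f (F ` D)"
  shows "\<forall>x\<in>D. (1/2) * (norm (gradient (f \<circ> F) x))\<^sup>2 \<ge> lamF * lamf * ((f \<circ> F) x - (INF h. f h))"
proof
  fix x assume xD: "x \<in> D"
  define L where "L = frechet_derivative F (at x)"
  have Fd: "(F has_derivative L) (at x)" using assms(3) xD
    by (simp add: UC_def L_def frechet_derivative_works)
  have coer: "coercive lamF (L \<circ> adjoint L)" using assms(3) xD by (simp add: UC_def L_def)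
  have fdiff: "f differentiable (at (F x))" and pl: "(1/2) * (norm (gradient f (F x)))\<^sup>2 \<ge> lamf * (f (F x) - (INF h. f h))"
    using assms(4) xD by (auto simp: PL_def)
  have blL: "bounded_linear L" using Fd has_derivative_bounded_linear by blast
  obtain f' where f': "(f has_derivative f') (at (F x))"
    using fdiff by (auto simp: differentiable_def)
  then obtain g0 where "\<forall>v. f' v = inner v g0"
    using riesz_rep has_derivative_bounded_linear by metis
  then have "f' = (\<lambda>v. inner v g0)" by auto
  then have "GDERIV f (F x) :> g0" using f' by (simp add: gderiv_def)
  then have gd: "GDERIV f (F x) :> gradient f (F x)" unfolding gradient_def by (rule someI)
  define g where "g = gradient f (F x)"
  have "\<forall>y. \<exists>w. \<forall>v. inner (L v) y = inner v w"
  proof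
    fix y
    have "bounded_linear (\<lambda>v. inner (L v) y)"
      by (intro bounded_linear_compose[OF bounded_linear_inner_left blL])
    then show "\<exists>w. \<forall>v. inner (L v) y = inner v w" by (rule riesz_rep)
  qed
  then have "\<exists>B. \<forall>y v. inner (L v) y = inner v (B y)" by metis
  then have "\<exists>B. \<forall>v y. inner (L v) y = inner v (B y)" by blast
  then have adj: "\<forall>v y. inner (L v) y = inner v (adjoint L y)"
    unfolding adjoint_def by (rule someI_ex)
  have "((f \<circ> F) has_derivative (\<lambda>v. inner (L v) g)) (at x)"
    using diff_chain_at[OF Fd gd[unfolded gderiv_def]] by (simp add: g_def o_def)
  then have cd: "GDERIV (f \<circ> F) x :> adjoint L g" unfolding gderiv_def using adj by simp
  have geq: "gradient (f \<circ> F) x = adjoint L g"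
    unfolding gradient_def
  proof (rule some_equality)
    fix a assume "GDERIV (f \<circ> F) x :> a"
    then have "(\<lambda>h. inner h a) = (\<lambda>h. inner h (adjoint L g))"
      using cd unfolding gderiv_def by (rule has_derivative_unique)
    then have "inner (a - adjoint L g) a = inner (a - adjoint L g) (adjoint L g)" by metis
    then have "inner (a - adjoint L g) (a - adjoint L g) = 0" by (simp add: inner_diff_right)
    then show "a = adjoint L g" by simp
  qed (rule cd)
  have "(norm (adjoint L g))\<^sup>2 = inner (L (adjoint L g)) g"
    using adj by (simp add: power2_norm_eq_inner)
  also have "\<dots> = inner g ((L \<circ> adjoint L) g)" by (simp add: inner_commute)
  finally have "(norm (adjoint L g))\<^sup>2 \<ge> lamF * (norm g)\<^sup>2"
    using coer by (simp add: coercive_def)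
  moreover have "(1/2) * (norm g)\<^sup>2 \<ge> lamf * (f (F x) - (INF h. f h))" using pl by (simp add: g_def)
  ultimately have "(1/2) * (norm (adjoint L g))\<^sup>2 \<ge> lamF * ((1/2) * (norm g)\<^sup>2)" by simp
  moreover have "lamF * ((1/2) * (norm g)\<^sup>2) \<ge> lamF * (lamf * (f (F x) - (INF h. f h)))"
    using \<open>(1/2) * (norm g)\<^sup>2 \<ge> _\<close> assms(1) by (intro mult_left_mono) auto
  ultimately show "(1/2) * (norm (gradient (f \<circ> F) x))\<^sup>2 \<ge> lamF * lamf * ((f \<circ> F) x - (INF h. f h))"
    by (simp add: geq mult.assoc)
qed

end
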